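(* Let $\langle A,\to\rangle$ be a conditional algebra. Then $\langle A,\to\rangle$ is a pseudo-subordination algebra (i.e., additionally satisfies $0\to a=1$ and $(a\to c)\wedge(b\to c)\le(a\vee b)\to c$ for all $a,b,c$) if and only if $T_A$ satisfies: for all ultrafilters $u,v$ and all $Y$, if $T_A(u,Y,v)$ then there exists $w\in Y$ such that $T_A(u,\{w\},v)$.
   Context: A conditional algebra is $\langle A,\to\rangle$ with $A$ a Boolean algebra and $\to$ binary with $a\to1=1$, $(a\to b)\wedge(a\to c)=a\to(b\wedge c)$, $(a\vee b)\to c\le(a\to c)\wedge(b\to c)$. Filters include the improper filter $A$; for a filter $F$, $\varphi(F)=\{u\in\mathrm{Ul}(A):F\subseteq u\}$ (so $\varphi(A)=\emptyset$). $D^{\to}_u(F)=\{b:\exists a\in F,\ a\to b\in u\}$; $T_A(u,Z,v)$ iff there is a filter $F$ with $Z=\varphi(F)$ and $D^{\to}_u(F)\subseteq v$. *)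

theory Defs
  imports Main
begin

definition conditional_algebra :: "('a::boolean_algebra \<Rightarrow> 'a \<Rightarrow> 'a) \<Rightarrow> bool" where
  "conditional_algebra imp \<longleftrightarrow>
     (\<forall>a. imp a top = top) \<and>
     (\<forall>a b c. inf (imp a b) (imp a c) = imp a (inf b c)) \<and>
     (\<forall>a b c. imp (sup a b) c \<le> inf (imp a c) (imp b c))"

definition pseudo_subordination_algebra :: "('a::boolean_algebra \<Rightarrow> 'a \<Rightarrow> 'a) \<Rightarrow> bool" where
  "pseudo_subordination_algebra imp \<longleftrightarrow>
     conditional_algebra imp \<and>
     (\<forall>a. imp bot a = top) \<and>
     (\<forall>a b c. inf (imp a c) (imp b c) \<le> imp (sup a b) c)"

text \<open>Filters (the improper filter UNIV included).\<close>
definition is_filter :: "'a::boolean_algebra set \<Rightarrow> bool" where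
  "is_filter F \<longleftrightarrow> top \<in> F \<and> (\<forall>a b. a \<in> F \<longrightarrow> a \<le> b \<longrightarrow> b \<in> F)
     \<and> (\<forall>a b. a \<in> F \<longrightarrow> b \<in> F \<longrightarrow> inf a b \<in> F)"

definition is_ultrafilter :: "'a::boolean_algebra set \<Rightarrow> bool" where
  "is_ultrafilter u \<longleftrightarrow> is_filter u \<and> u \<noteq> UNIV \<and>
     (\<forall>G. is_filter G \<longrightarrow> G \<noteq> UNIV \<longrightarrow> u \<subseteq> G \<longrightarrow> G = u)"

definition Ul :: "'a::boolean_algebra set set" where
  "Ul = {u. is_ultrafilter u}"

definition phi :: "'a::boolean_algebra set \<Rightarrow> 'a set set" where
  "phi F = {u \<in> Ul. F \<subseteq> u}"

definition D_imp :: "('a::boolean_algebra \<Rightarrow> 'a \<Rightarrow> 'a) \<Rightarrow> 'a set \<Rightarrow> 'a set \<Rightarrow> 'a set" where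
  "D_imp imp u F = {b. \<exists>a\<in>F. imp a b \<in> u}"

definition T_A :: "('a::boolean_algebra \<Rightarrow> 'a \<Rightarrow> 'a) \<Rightarrow> 'a set \<Rightarrow> 'a set set \<Rightarrow> 'a set \<Rightarrow> bool" where
  "T_A imp u Z v \<longleftrightarrow> (\<exists>F. is_filter F \<and> Z = phi F \<and> D_imp imp u F \<subseteq> v)"

end

theory Submission
  imports Defs
begin

lemma filter_gen:
  assumes "is_filter M"
  shows "is_filter {y. \<exists>g\<in>M. inf g x \<le> y}"
  unfolding is_filter_def
proof (intro conjI allI impI)
  show "top \<in> {y. \<exists>g\<in>M. inf g x \<le> y}" using assms unfolding is_filter_def by auto
next
  fix a b assume "a \<in> {y. \<exists>g\<in>M. inf g x \<le> y}" "a \<le> b"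
  then show "b \<in> {y. \<exists>g\<in>M. inf g x \<le> y}" by (blast intro: order_trans)
next
  fix a b assume "a \<in> {y. \<exists>g\<in>M. inf g x \<le> y}" "b \<in> {y. \<exists>g\<in>M. inf g x \<le> y}"
  then obtain g1 g2 where g: "g1 \<in> M" "g2 \<in> M" "inf g1 x \<le> a" "inf g2 x \<le> b" by blast
  have "inf g1 g2 \<in> M" using g assms unfolding is_filter_def by blast
  moreover have "inf (inf g1 g2) x \<le> inf a b"
  proof -
    have "inf (inf g1 g2) x \<le> inf g1 x" by (intro inf_mono) auto
    moreover have "inf (inf g1 g2) x \<le> inf g2 x" by (intro inf_mono) auto
    ultimately show ?thesis using g by (meson le_inf_iff order_trans)
  qed
  ultimately show "inf a b \<in> {y. \<exists>g\<in>M. inf g x \<le> y}" by blast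
qed

lemma filter_UNIV: "is_filter F \<Longrightarrow> bot \<in> F \<Longrightarrow> F = UNIV"
  unfolding is_filter_def using bot_least by blast

lemma sep:
  assumes F: "is_filter F" and I0: "bot \<in> I"
    and Id: "\<And>x y. y \<in> I \<Longrightarrow> x \<le> y \<Longrightarrow> x \<in> I"
    and Ij: "\<And>x y. x\<in>I \<Longrightarrow> y\<in>I \<Longrightarrow> sup x y \<in> I"
    and disj: "F \<inter> I = {}"
  shows "\<exists>u. is_ultrafilter u \<and> F \<subseteq> u \<and> u \<inter> I = {}"
proof -
  define A where "A = {G. is_filter G \<and> F \<subseteq> G \<and> G \<inter> I = {}}"
  have "\<exists>M\<in>A. \<forall>X\<in>A. M \<subseteq> X \<longrightarrow> X = M"
  proof (rule subset_Zorn_nonempty)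
    show "A \<noteq> {}" using F disj unfolding A_def by blast
  next
    fix C assume C: "C \<noteq> {}" "subset.chain A C"
    then have CA: "C \<subseteq> A" and ch: "\<forall>X\<in>C. \<forall>Y\<in>C. X \<subseteq> Y \<or> Y \<subseteq> X"
      by (auto simp: subset_chain_def)
    obtain X0 where X0: "X0 \<in> C" using C by blast
    have "is_filter (\<Union>C)"
      unfolding is_filter_def
    proof (intro conjI allI impI)
      show "top \<in> \<Union>C" using X0 CA unfolding A_def is_filter_def by blast
    next
      fix a b assume "a \<in> \<Union>C" "a \<le> b" then show "b \<in> \<Union>C"
        using CA unfolding A_def is_filter_def by blast
    next
      fix a b assume a: "a \<in> \<Union>C" and b: "b \<in> \<Union>C"
      then obtain X Y where XY: "X \<in> C" "Y \<in> C" "a \<in> X" "b \<in> Y" by blast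
      have fil: "is_filter Z" if "Z \<in> C" for Z using that CA unfolding A_def by blast
      have "\<exists>Z\<in>C. a \<in> Z \<and> b \<in> Z"
      proof (cases "X \<subseteq> Y")
        case True then show ?thesis using XY by blast
      next
        case False then have "Y \<subseteq> X" using ch XY by blast
        then show ?thesis using XY by blast
      qed
      then obtain Z where Z: "Z \<in> C" "a \<in> Z" "b \<in> Z" by blast
      then have "inf a b \<in> Z" using fil[OF Z(1)] unfolding is_filter_def by blast
      then show "inf a b \<in> \<Union>C" using Z by blast
    qed
    then show "\<Union>C \<in> A" using CA X0 unfolding A_def by blast
  qed
  then obtain M where MA: "M \<in> A" and Mmax: "\<forall>X\<in>A. M \<subseteq> X \<longrightarrow> X = M" by blast
  have Mf: "is_filter M" and FM: "F \<subseteq> M" and MI: "M \<inter> I = {}" using MA unfolding A_def by auto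
  have H: "\<exists>g\<in>M. inf g x \<in> I" if "x \<notin> M" for x
  proof (rule ccontr)
    assume nn: "\<not> (\<exists>g\<in>M. inf g x \<in> I)"
    let ?H = "{y. \<exists>g\<in>M. inf g x \<le> y}"
    have "?H \<inter> I = {}" using nn Id by blast
    moreover have "M \<subseteq> ?H" using inf_le1 by blast
    ultimately have "?H \<in> A" using filter_gen[OF Mf] FM unfolding A_def by blast
    then have "?H = M" using Mmax \<open>M \<subseteq> ?H\<close> by blast
    moreover have "x \<in> ?H" using Mf unfolding is_filter_def by (intro CollectI bexI[of _ top]) auto
    ultimately show False using that by blast
  qed
  have compl: "x \<in> M \<or> - x \<in> M" for x
  proof (rule ccontr)
    assume "\<not> (x \<in> M \<or> - x \<in> M)"
    then obtain g1 g2 where g: "g1 \<in> M" "g2 \<in> M" "inf g1 x \<in> I" "inf g2 (-x) \<in> I"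
      using H by meson
    have "sup (inf g1 x) (inf g2 (-x)) \<in> I" using Ij g by blast
    moreover have "inf g1 g2 \<le> sup (inf g1 x) (inf g2 (-x))"
    proof -
      have "inf g1 g2 = inf (inf g1 g2) (sup x (-x))" by simp
      also have "\<dots> = sup (inf (inf g1 g2) x) (inf (inf g1 g2) (-x))" by (rule inf_sup_distrib1)
      also have "\<dots> \<le> sup (inf g1 x) (inf g2 (-x))"
        by (intro sup_mono inf_mono) auto
      finally show ?thesis .
    qed
    ultimately have "inf g1 g2 \<in> I" using Id by blast
    moreover have "inf g1 g2 \<in> M" using g Mf unfolding is_filter_def by blast
    ultimately show False using MI by blast
  qed
  have "M \<noteq> UNIV" using MI I0 by blast
  moreover have "G = M" if G: "is_filter G" "G \<noteq> UNIV" "M \<subseteq> G" for G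
  proof
    show "G \<subseteq> M"
    proof
      fix h assume h: "h \<in> G"
      show "h \<in> M"
      proof (rule ccontr)
        assume "h \<notin> M" then have "-h \<in> M" using compl by blast
        then have "inf h (-h) \<in> G" using h G unfolding is_filter_def by blast
        then have "G = UNIV" using filter_UNIV[OF G(1)] by simp
        then show False using G by blast
      qed
    qed
  qed (use that in blast)
  ultimately have "is_ultrafilter M" using Mf unfolding is_ultrafilter_def by blast
  then show ?thesis using FM MI by blast
qed


lemma principal_filter: "is_filter {z. x \<le> z}"
  unfolding is_filter_def by auto

lemma ultra_elem:
  assumes F: "is_filter F" and a: "a \<notin> F"
  shows "\<exists>u. is_ultrafilter u \<and> F \<subseteq> u \<and> a \<notin> u"
proof -
  have "F \<inter> {x. x \<le> a} = {}" using F a unfolding is_filter_def by blast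
  then have "\<exists>u. is_ultrafilter u \<and> F \<subseteq> u \<and> u \<inter> {x. x \<le> a} = {}"
    by (intro sep[OF F]) (auto intro: order_trans)
  then obtain u where "is_ultrafilter u" "F \<subseteq> u" "u \<inter> {x. x \<le> a} = {}"
    by blast
  then show ?thesis by blast
qed

lemma ultra_compl:
  assumes u: "is_ultrafilter u" and x: "x \<notin> u"
  shows "- x \<in> u"
proof -
  have uf: "is_filter u" using u unfolding is_ultrafilter_def by blast
  let ?H = "{y. \<exists>g\<in>u. inf g x \<le> y}"
  have Hf: "is_filter ?H" by (rule filter_gen[OF uf])
  have sub: "u \<subseteq> ?H" using inf_le1 by blast
  have xH: "x \<in> ?H" using uf unfolding is_filter_def by (intro CollectI bexI[of _ top]) auto
  have "?H = UNIV"
  proof (rule ccontr)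
    assume "?H \<noteq> UNIV"
    then have "?H = u" using u Hf sub unfolding is_ultrafilter_def by blast
    then show False using xH x by blast
  qed
  then have "bot \<in> ?H" by blast
  then obtain g where g: "g \<in> u" "inf g x \<le> bot" by blast
  then have "g \<le> - x" using inf_shunt by (metis bot_unique)
  then show ?thesis using g uf unfolding is_filter_def by blast
qed

lemma ultra_bot: "is_ultrafilter u \<Longrightarrow> bot \<notin> u"
  unfolding is_ultrafilter_def using filter_UNIV by blast

lemma ultra_sup:
  assumes u: "is_ultrafilter u" and s: "sup x y \<in> u"
  shows "x \<in> u \<or> y \<in> u"
proof (rule ccontr)
  assume "\<not> (x \<in> u \<or> y \<in> u)"
  then have "-x \<in> u" "-y \<in> u" using ultra_compl u by blast+
  have uf: "is_filter u" using u unfolding is_ultrafilter_def by blast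
  have "inf (sup x y) (inf (-x) (-y)) \<in> u" using uf s \<open>-x \<in> u\<close> \<open>-y \<in> u\<close> unfolding is_filter_def by blast
  moreover have "inf (sup x y) (inf (-x) (-y)) = bot"
    by (metis compl_sup inf_compl_bot)
  ultimately have "bot \<in> u" by simp
  then show False using ultra_bot[OF u] by blast
qed

lemma phi_single: "is_ultrafilter w \<Longrightarrow> phi w = {w}"
  unfolding phi_def Ul_def is_ultrafilter_def by blast

lemma phi_eq:
  assumes F: "is_filter F" and p: "phi F = {w}" and a: "a \<in> w"
  shows "a \<in> F"
proof (rule ccontr)
  assume "a \<notin> F"
  then obtain u where "is_ultrafilter u" "F \<subseteq> u" "a \<notin> u" using ultra_elem F by blast
  then have "u \<in> phi F" unfolding phi_def Ul_def by blast
  then show False using p a \<open>a \<notin> u\<close> by blast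
qed

lemma ca_mono2:
  assumes "conditional_algebra imp" "b \<le> c"
  shows "imp a b \<le> imp a c"
proof -
  have "imp a b = imp a (inf b c)" using assms(2) by (simp add: inf_absorb1)
  also have "\<dots> = inf (imp a b) (imp a c)" using assms(1) unfolding conditional_algebra_def by simp
  finally show ?thesis by (metis inf.orderI)
qed

lemma ca_anti1:
  assumes "conditional_algebra imp" "a \<le> b"
  shows "imp b c \<le> imp a c"
proof -
  have "imp b c = imp (sup a b) c" using assms(2) by (simp add: sup_absorb2)
  also have "\<dots> \<le> inf (imp a c) (imp b c)" using assms(1) unfolding conditional_algebra_def by blast
  finally show ?thesis by simp
qed


lemma ultra_filter: "is_ultrafilter u \<Longrightarrow> is_filter u"
  unfolding is_ultrafilter_def by blast

lemma filter_up: "is_filter F \<Longrightarrow> a \<in> F \<Longrightarrow> a \<le> b \<Longrightarrow> b \<in> F"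
  unfolding is_filter_def by blast

lemma filter_inf: "is_filter F \<Longrightarrow> a \<in> F \<Longrightarrow> b \<in> F \<Longrightarrow> inf a b \<in> F"
  unfolding is_filter_def by blast

lemma filter_top: "is_filter F \<Longrightarrow> top \<in> F"
  unfolding is_filter_def by blast

lemma imp_filter:
  assumes ca: "conditional_algebra imp" and u: "is_ultrafilter u"
  shows "is_filter {d. imp e d \<in> u}"
  unfolding is_filter_def
proof (intro conjI allI impI)
  show "top \<in> {d. imp e d \<in> u}" using ca filter_top[OF ultra_filter[OF u]]
    unfolding conditional_algebra_def by simp
next
  fix a b assume "a \<in> {d. imp e d \<in> u}" "a \<le> b"
  then show "b \<in> {d. imp e d \<in> u}" using ca_mono2[OF ca] filter_up[OF ultra_filter[OF u]] by blast
next
  fix a b assume "a \<in> {d. imp e d \<in> u}" "b \<in> {d. imp e d \<in> u}"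
  then have "inf (imp e a) (imp e b) \<in> u" using filter_inf[OF ultra_filter[OF u]] by blast
  then show "inf a b \<in> {d. imp e d \<in> u}" using ca unfolding conditional_algebra_def by simp
qed

theorem theorem9p4:
  fixes imp :: "'a::boolean_algebra \<Rightarrow> 'a \<Rightarrow> 'a"
  assumes "conditional_algebra imp"
  shows "pseudo_subordination_algebra imp \<longleftrightarrow>
    (\<forall>u\<in>Ul. \<forall>v\<in>Ul. \<forall>Y. T_A imp u Y v \<longrightarrow> (\<exists>w\<in>Y. T_A imp u {w} v))"
proof
  note ca = assms
  assume ps: "pseudo_subordination_algebra imp"
  have bt: "imp bot a = top" for a using ps unfolding pseudo_subordination_algebra_def by blast
  have jn: "inf (imp a c) (imp b c) \<le> imp (sup a b) c" for a b c
    using ps unfolding pseudo_subordination_algebra_def by blast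
  show "\<forall>u\<in>Ul. \<forall>v\<in>Ul. \<forall>Y. T_A imp u Y v \<longrightarrow> (\<exists>w\<in>Y. T_A imp u {w} v)"
  proof (intro ballI allI impI)
    fix u v Y assume uU: "u \<in> Ul" and vU: "v \<in> Ul" and T: "T_A imp u Y v"
    have u: "is_ultrafilter u" and v: "is_ultrafilter v" using uU vU unfolding Ul_def by auto
    have uf: "is_filter u" using ultra_filter[OF u] .
    obtain F where F: "is_filter F" "Y = phi F" "D_imp imp u F \<subseteq> v"
      using T unfolding T_A_def by blast
    define I where "I = {a. \<exists>b. b \<notin> v \<and> imp a b \<in> u}"
    have I0: "bot \<in> I" proof -
      have "imp bot bot \<in> u" using bt[of bot] filter_top[OF uf] by simp
      then show ?thesis unfolding I_def using ultra_bot[OF v] by blast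
    qed
    have Id: "x \<in> I" if yx: "y \<in> I" "x \<le> y" for x y
    proof -
      obtain b where "b \<notin> v" "imp y b \<in> u" using yx(1) unfolding I_def by blast
      moreover have "imp y b \<le> imp x b" using ca_anti1[OF ca yx(2)] .
      ultimately show ?thesis unfolding I_def using filter_up[OF uf] by blast
    qed
    have Ij: "sup x y \<in> I" if xy: "x \<in> I" "y \<in> I" for x y
    proof -
      obtain b1 where b1: "b1 \<notin> v" "imp x b1 \<in> u" using xy(1) unfolding I_def by blast
      obtain b2 where b2: "b2 \<notin> v" "imp y b2 \<in> u" using xy(2) unfolding I_def by blast
      have nb: "sup b1 b2 \<notin> v" using ultra_sup[OF v] b1 b2 by blast
      have "imp x (sup b1 b2) \<in> u" using filter_up[OF uf b1(2) ca_mono2[OF ca]] by simp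
      moreover have "imp y (sup b1 b2) \<in> u" using filter_up[OF uf b2(2) ca_mono2[OF ca]] by simp
      ultimately have "inf (imp x (sup b1 b2)) (imp y (sup b1 b2)) \<in> u" using filter_inf[OF uf] by blast
      then have "imp (sup x y) (sup b1 b2) \<in> u" using filter_up[OF uf _ jn] by blast
      then show ?thesis using nb unfolding I_def by blast
    qed
    have disj: "F \<inter> I = {}"
    proof -
      { fix a assume "a \<in> F" "a \<in> I"
        then obtain b where "b \<notin> v" "imp a b \<in> u" unfolding I_def by blast
        then have "b \<in> D_imp imp u F" unfolding D_imp_def using \<open>a \<in> F\<close> by blast
        then have False using F(3) \<open>b \<notin> v\<close> by blast }
      then show ?thesis by blast
    qed
    obtain w where w: "is_ultrafilter w" "F \<subseteq> w" "w \<inter> I = {}"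
    proof -
      have "\<exists>w. is_ultrafilter w \<and> F \<subseteq> w \<and> w \<inter> I = {}"
        apply (rule sep[OF F(1) I0 _ _ disj])
        using Id Ij by blast+
      then show ?thesis using that by blast
    qed
    have "w \<in> Y" using w F(2) unfolding phi_def Ul_def by blast
    moreover have "T_A imp u {w} v"
      unfolding T_A_def
    proof (intro exI conjI)
      show "is_filter w" using ultra_filter[OF w(1)] .
      show "{w} = phi w" using phi_single[OF w(1)] by simp
      show "D_imp imp u w \<subseteq> v"
      proof
        fix b assume "b \<in> D_imp imp u w"
        then obtain a where "a \<in> w" "imp a b \<in> u" unfolding D_imp_def by blast
        then show "b \<in> v" using w(3) unfolding I_def by blast
      qed
    qed
    ultimately show "\<exists>w\<in>Y. T_A imp u {w} v" by blast
  qed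
next
  note ca = assms
  assume P: "\<forall>u\<in>Ul. \<forall>v\<in>Ul. \<forall>Y. T_A imp u Y v \<longrightarrow> (\<exists>w\<in>Y. T_A imp u {w} v)"
  have bb: "imp bot bot \<in> u" if u: "is_ultrafilter u" for u
  proof (rule ccontr)
    assume nb: "imp bot bot \<notin> u"
    have Gf: "is_filter {d. imp bot d \<in> u}" using imp_filter[OF ca u] .
    then obtain v where v: "is_ultrafilter v" "{d. imp bot d \<in> u} \<subseteq> v"
      using ultra_elem[OF Gf, of bot] nb by blast
    have "T_A imp u {} v"
      unfolding T_A_def
    proof (intro exI conjI)
      show "is_filter (UNIV::'a set)" unfolding is_filter_def by simp
      show "{} = phi (UNIV::'a set)" unfolding phi_def Ul_def is_ultrafilter_def by blast
      show "D_imp imp u UNIV \<subseteq> v"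
      proof
        fix b assume "b \<in> D_imp imp u UNIV"
        then obtain a where ab: "imp a b \<in> u" unfolding D_imp_def by blast
        have "imp bot b \<in> u" by (rule filter_up[OF ultra_filter[OF u] ab ca_anti1[OF ca bot_least]])
        then show "b \<in> v" using v by blast
      qed
    qed
    then show False using P u v unfolding Ul_def by blast
  qed
  have bbt: "imp bot bot = top"
  proof (rule ccontr)
    assume "imp bot bot \<noteq> top"
    then have "imp bot bot \<notin> {z. top \<le> z}" by (simp add: top_unique)
    then obtain u where "is_ultrafilter u" "imp bot bot \<notin> u"
      using ultra_elem[OF principal_filter] by blast
    then show False using bb by blast
  qed
  have bt: "imp bot a = top" for a
    using ca_mono2[OF ca, of bot a bot] bbt by (simp add: top_unique)
  have jn: "inf (imp a c) (imp b c) \<le> imp (sup a b) c" for a b c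
  proof (rule ccontr)
    let ?x = "inf (imp a c) (imp b c)" and ?y = "imp (sup a b) c"
    assume "\<not> ?x \<le> ?y"
    then have "?y \<notin> {z. ?x \<le> z}" by simp
    then obtain u where u: "is_ultrafilter u" "{z. ?x \<le> z} \<subseteq> u" "?y \<notin> u"
      using ultra_elem[OF principal_filter] by blast
    have xu: "?x \<in> u" using u(2) by blast
    have uf: "is_filter u" using ultra_filter[OF u(1)] .
    have ac: "imp a c \<in> u" using filter_up[OF uf xu] by simp
    have bc: "imp b c \<in> u" using filter_up[OF uf xu] by simp
    have Gf: "is_filter {d. imp (sup a b) d \<in> u}" using imp_filter[OF ca u(1)] .
    obtain v where v: "is_ultrafilter v" "{d. imp (sup a b) d \<in> u} \<subseteq> v" "c \<notin> v"
      using ultra_elem[OF Gf, of c] u(3) by blast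
    let ?F = "{z. sup a b \<le> z}"
    have "T_A imp u (phi ?F) v"
      unfolding T_A_def
    proof (intro exI conjI)
      show "is_filter ?F" by (rule principal_filter)
      show "phi ?F = phi ?F" ..
      show "D_imp imp u ?F \<subseteq> v"
      proof
        fix d assume "d \<in> D_imp imp u ?F"
        then obtain e where e: "sup a b \<le> e" "imp e d \<in> u" unfolding D_imp_def by blast
        have "imp (sup a b) d \<in> u" by (rule filter_up[OF uf e(2) ca_anti1[OF ca e(1)]])
        then show "d \<in> v" using v by blast
      qed
    qed
    then obtain w where w: "w \<in> phi ?F" "T_A imp u {w} v"
      using P u(1) v(1) unfolding Ul_def by blast
    obtain F' where F': "is_filter F'" "{w} = phi F'" "D_imp imp u F' \<subseteq> v"
      using w(2) unfolding T_A_def by blast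
    have wu: "is_ultrafilter w" and sw: "sup a b \<in> w" using w(1) unfolding phi_def Ul_def by auto
    have "c \<in> v"
    proof (cases "a \<in> w")
      case True
      then have "a \<in> F'" using phi_eq[OF F'(1) F'(2)[symmetric]] by blast
      then have "c \<in> D_imp imp u F'" using ac unfolding D_imp_def by blast
      then show ?thesis using F'(3) by blast
    next
      case False
      then have "b \<in> w" using ultra_sup[OF wu sw] by blast
      then have "b \<in> F'" using phi_eq[OF F'(1) F'(2)[symmetric]] by blast
      then have "c \<in> D_imp imp u F'" using bc unfolding D_imp_def by blast
      then show ?thesis using F'(3) by blast
    qed
    then show False using v(3) by blast
  qed
  show "pseudo_subordination_algebra imp"
    unfolding pseudo_subordination_algebra_def using ca bt jn by blast
qed

end
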